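(* Let $f:\mathbb{R}^d\to\mathbb{R}$ be twice differentiable with $\inf f>-\infty$, and suppose there are constants $L,M>0$ with $\|\nabla f(x)-\nabla f(y)\|\le L\|x-y\|$ and $\|\nabla^2 f(x)-\nabla^2 f(y)\|_{\mathrm{op}}\le M\|x-y\|$ for all $x,y$. Let $x_k\in\mathbb{R}^d$, $s_k\in\mathbb{R}^d$, $x_{k+1}:=x_k+s_k$, $\theta\in(0,1)$, and $B_k,X\in\mathbb{S}^d$, and define $$B_{k+1}:=\frac{1-\theta}{1+\theta}(B_k+X).$$ Then $$\gamma_{k+1}-\gamma_k\le 2dL^2\theta+\frac{dM^2}{2\theta}\|s_k\|^2+\|X\|_F^2-2\langle X,G_k-B_k\rangle.$$
   Context: $\mathbb{S}^d$ is the set of real symmetric $d\times d$ matrices with inner product $\langle A,B\rangle=\mathrm{tr}(A^\top B)$; $\|\cdot\|_F$ is the Frobenius norm and $\|\cdot\|_{\mathrm{op}}$ the spectral norm. For $j\in\{k,k+1\}$, $$\gamma_j:=\|B_j-\nabla^2 f(x_j)\|_F^2-\|\nabla^2 f(x_j)\|_F^2+\frac{\theta}{1-\theta}\|B_j\|_F^2,$$ and $G_k:=\int_0^1\nabla^2 f(x_k+\tau s_k)\,d\tau$. *)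

theory Defs
  imports "HOL-Analysis.Analysis"
begin

text \<open>Matrices in S^d are represented as real^'n^'n (d = CARD('n)), with a symmetry assumption.\<close>

definition frob_inner :: "real^'n^'n \<Rightarrow> real^'n^'n \<Rightarrow> real" where
  "frob_inner A B = (\<Sum>i\<in>UNIV. \<Sum>j\<in>UNIV. A$i$j * B$i$j)"

definition frob_norm :: "real^'n^'n \<Rightarrow> real" where
  "frob_norm A = sqrt (frob_inner A A)"

definition op_norm :: "real^'n^'n \<Rightarrow> real" where
  "op_norm A = onorm (\<lambda>v. A *v v)"

definition sym_mat :: "real^'n^'n \<Rightarrow> bool" where
  "sym_mat A \<longleftrightarrow> transpose A = A"

text \<open>gamma_j with B = B_j and Hx = Hessian at x_j\<close>
definition gamma :: "real \<Rightarrow> real^'n^'n \<Rightarrow> real^'n^'n \<Rightarrow> real" where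
  "gamma \<theta> B Hx = (frob_norm (B - Hx))\<^sup>2 - (frob_norm Hx)\<^sup>2 + \<theta> / (1 - \<theta>) * (frob_norm B)\<^sup>2"

end

theory Submission
  imports Defs
begin

lemma frob_inner_eq: "frob_inner A B = A \<bullet> B"
  by (simp add: frob_inner_def inner_vec_def)

lemma frob_norm_eq: "frob_norm A = norm A"
  by (simp add: frob_norm_def frob_inner_eq norm_eq_sqrt_inner)

lemma opnorm_mul: "norm (A *v v) \<le> op_norm A * norm (v::real^'n)"
  for A :: "real^'n^'n"
  unfolding op_norm_def by (rule onorm) simp

lemma norm_sq_le_op: "(norm A)\<^sup>2 \<le> real CARD('n) * (op_norm A)\<^sup>2"
  for A :: "real^'n^'n"
proof -
  have "A \<bullet> A = (\<Sum>i\<in>UNIV. \<Sum>j\<in>UNIV. (A$i$j)\<^sup>2)"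
    by (simp add: inner_vec_def power2_eq_square)
  then have "(norm A)\<^sup>2 = (\<Sum>i\<in>UNIV. \<Sum>j\<in>UNIV. (A$i$j)\<^sup>2)"
    by (simp only: power2_norm_eq_inner)
  also have "\<dots> = (\<Sum>j\<in>UNIV. \<Sum>i\<in>UNIV. (A$i$j)\<^sup>2)"
    by (rule sum.swap)
  also have "\<dots> = (\<Sum>j\<in>UNIV. (norm (A *v axis j 1))\<^sup>2)"
  proof (rule sum.cong[OF refl])
    fix j
    have "(A *v axis j 1) = (\<chi> i. A$i$j)"
      by (simp add: matrix_vector_mult_def axis_def vec_eq_iff if_distrib cong: if_cong)
    moreover have "(\<chi> i. A$i$j) \<bullet> (\<chi> i. A$i$j) = (\<Sum>i\<in>UNIV. (A$i$j)\<^sup>2)"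
      by (simp add: inner_vec_def power2_eq_square)
    ultimately show "(\<Sum>i\<in>UNIV. (A$i$j)\<^sup>2) = (norm (A *v axis j 1))\<^sup>2"
      by (simp only: power2_norm_eq_inner)
  qed
  also have "\<dots> \<le> (\<Sum>j\<in>(UNIV::'n set). (op_norm A)\<^sup>2)"
  proof (rule sum_mono)
    fix j :: 'n
    have "norm (A *v axis j 1) \<le> op_norm A" using opnorm_mul[of A "axis j 1"] by simp
    then show "(norm (A *v axis j 1))\<^sup>2 \<le> (op_norm A)\<^sup>2"
      by (simp add: power_mono)
  qed
  also have "\<dots> = real CARD('n) * (op_norm A)\<^sup>2" by simp
  finally show ?thesis .
qed

lemma norm_le_op: "norm A \<le> sqrt (real CARD('n)) * op_norm A"
  for A :: "real^'n^'n"
proof -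
  have "0 \<le> op_norm A" unfolding op_norm_def by (rule onorm_pos_le) simp
  then have "sqrt ((norm A)\<^sup>2) \<le> sqrt (real CARD('n) * (op_norm A)\<^sup>2)"
    using norm_sq_le_op[of A] real_sqrt_le_mono by blast
  then show ?thesis using \<open>0 \<le> op_norm A\<close> by (simp add: real_sqrt_mult)
qed

lemma deriv_bound:
  fixes g :: "real^'n \<Rightarrow> real^'n"
  assumes hess: "(g has_derivative (\<lambda>h. D *v h)) (at x)"
    and lip: "\<And>x y. norm (g x - g y) \<le> L * norm (x - y)" and L: "L \<ge> 0"
  shows "norm (D *v h) \<le> L * norm h"
proof (cases "h = 0")
  case True then show ?thesis by simp
next
  case False
  then have hp: "norm h > 0" by simp
  have "norm (D *v h) \<le> (L + e) * norm h" if e: "e > 0" for e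
  proof -
    obtain d where d: "d > 0" and dd: "\<And>y. norm (y - x) < d \<Longrightarrow> norm (g y - g x - D *v (y - x)) \<le> e * norm (y - x)"
      using hess e unfolding has_derivative_at_alt by blast
    define t where "t = d / (2 * norm h)"
    have tp: "t > 0" using d hp by (simp add: t_def)
    have "norm (t *\<^sub>R h) = d/2" using hp d by (simp add: t_def)
    then have "norm ((x + t *\<^sub>R h) - x) < d" using d by simp
    then have 1: "norm (g (x + t *\<^sub>R h) - g x - D *v (t *\<^sub>R h)) \<le> e * (t * norm h)"
      using dd[of "x + t *\<^sub>R h"] tp by simp
    have 2: "norm (g (x + t *\<^sub>R h) - g x) \<le> L * (t * norm h)"
      using lip[of "x + t *\<^sub>R h" x] tp by simp
    have "norm (D *v (t *\<^sub>R h)) \<le> norm (g (x + t *\<^sub>R h) - g x) + norm (g (x + t *\<^sub>R h) - g x - D *v (t *\<^sub>R h))"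
      by (metis add_diff_cancel_left' diff_add_cancel norm_triangle_ineq4 norm_minus_commute)
    also have "\<dots> \<le> t * ((L + e) * norm h)" using 1 2 by (simp add: algebra_simps)
    finally have "t * norm (D *v h) \<le> t * ((L + e) * norm h)"
      using tp by (simp add: matrix_vector_mult_scaleR)
    then show ?thesis using tp by simp
  qed
  note E = this
  show ?thesis
  proof (rule field_le_epsilon)
    fix e :: real assume "e > 0"
    then have "norm (D *v h) \<le> (L + e / norm h) * norm h" using E[of "e / norm h"] hp by simp
    also have "\<dots> = L * norm h + e" using hp by (simp add: field_simps)
    finally show "norm (D *v h) \<le> L * norm h + e" .
  qed
qed


lemma int_lin1: "((\<lambda>\<tau>::real. c * \<tau>) has_integral c/2) {0..1}"
proof -
  have "((\<lambda>\<tau>::real. c * \<tau>) has_integral ((\<lambda>t. c * t\<^sup>2/2) 1 - (\<lambda>t. c * t\<^sup>2/2) 0)) {0..1}"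
    by (rule fundamental_theorem_of_calculus)
       (auto intro!: derivative_eq_intros simp: has_real_derivative_iff_has_vector_derivative[symmetric])
  then show ?thesis by simp
qed

lemma int_lin2: "((\<lambda>\<tau>::real. c * (1 - \<tau>)) has_integral c/2) {0..1}"
proof -
  have "((\<lambda>\<tau>::real. c * (1 - \<tau>)) has_integral ((\<lambda>t. c * (t - t\<^sup>2/2)) 1 - (\<lambda>t. c * (t - t\<^sup>2/2)) 0)) {0..1}"
    by (rule fundamental_theorem_of_calculus)
       (auto intro!: derivative_eq_intros simp: has_real_derivative_iff_has_vector_derivative[symmetric])
  then show ?thesis by simp
qed

lemma int_bounds:
  fixes H :: "real^'n \<Rightarrow> real^'n^'n"
  assumes Hl: "\<And>x y. norm (H x - H y) \<le> K * norm (x - y)" and K: "K \<ge> 0"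
  shows "norm (integral {0..1} (\<lambda>\<tau>. H (xk + \<tau> *\<^sub>R sk)) - H (xk + sk)) \<le> K * norm sk / 2"
    and "norm (integral {0..1} (\<lambda>\<tau>. H (xk + \<tau> *\<^sub>R sk)) - H xk) \<le> K * norm sk / 2"
proof -
  have "K-lipschitz_on UNIV H"
    by (rule lipschitz_onI) (auto simp: dist_norm Hl K)
  then have cH: "continuous_on UNIV H" by (rule lipschitz_on_continuous_on)
  have cphi: "continuous_on {0..1} (\<lambda>\<tau>::real. H (xk + \<tau> *\<^sub>R sk))"
    by (rule continuous_on_compose2[OF cH]) (auto intro!: continuous_intros)
  then have ip: "(\<lambda>\<tau>::real. H (xk + \<tau> *\<^sub>R sk)) integrable_on {0..1}"
    by (rule integrable_continuous_interval)
  have ic: "(\<lambda>\<tau>::real. c) integrable_on {0..1}" for c :: "real^'n^'n" by (rule has_integral_integrable[OF has_integral_const_real])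
  have eq: "integral {0..1} (\<lambda>\<tau>. H (xk + \<tau> *\<^sub>R sk)) - c = integral {0..1} (\<lambda>\<tau>. H (xk + \<tau> *\<^sub>R sk) - c)"
    for c :: "real^'n^'n"
    using integral_diff[OF ip ic[of c]] by simp
  show "norm (integral {0..1} (\<lambda>\<tau>. H (xk + \<tau> *\<^sub>R sk)) - H (xk + sk)) \<le> K * norm sk / 2"
  proof -
    have "norm (integral {0..1} (\<lambda>\<tau>. H (xk + \<tau> *\<^sub>R sk) - H (xk + sk))) \<le> integral {0..1} (\<lambda>\<tau>. (K * norm sk) * (1 - \<tau>))"
    proof (rule integral_norm_bound_integral)
      show "(\<lambda>\<tau>. H (xk + \<tau> *\<^sub>R sk) - H (xk + sk)) integrable_on {0..1}"
        using ip ic by (rule integrable_diff)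
      show "(\<lambda>\<tau>. (K * norm sk) * (1 - \<tau>)) integrable_on {0..1::real}"
        using int_lin2 by blast
      fix \<tau> :: real assume "\<tau> \<in> {0..1}"
      then have "norm ((xk + \<tau> *\<^sub>R sk) - (xk + sk)) = (1 - \<tau>) * norm sk"
      proof -
        have "(xk + \<tau> *\<^sub>R sk) - (xk + sk) = (\<tau> - 1) *\<^sub>R sk" by (simp add: algebra_simps)
        then have "norm ((xk + \<tau> *\<^sub>R sk) - (xk + sk)) = \<bar>\<tau> - 1\<bar> * norm sk" by simp
        then show ?thesis using \<open>\<tau> \<in> {0..1}\<close> by simp
      qed
      note nd = this
      have "norm (H (xk + \<tau> *\<^sub>R sk) - H (xk + sk)) \<le> K * norm ((xk + \<tau> *\<^sub>R sk) - (xk + sk))" by (rule Hl)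
      also have "\<dots> = K * ((1 - \<tau>) * norm sk)" by (simp only: nd)
      finally show "norm (H (xk + \<tau> *\<^sub>R sk) - H (xk + sk)) \<le> (K * norm sk) * (1 - \<tau>)"
        by (simp only: mult_ac)
    qed
    also have "\<dots> = K * norm sk / 2" using int_lin2 by (rule integral_unique)
    finally show ?thesis using eq by simp
  qed
  show "norm (integral {0..1} (\<lambda>\<tau>. H (xk + \<tau> *\<^sub>R sk)) - H xk) \<le> K * norm sk / 2"
  proof -
    have "norm (integral {0..1} (\<lambda>\<tau>. H (xk + \<tau> *\<^sub>R sk) - H xk)) \<le> integral {0..1} (\<lambda>\<tau>. (K * norm sk) * \<tau>)"
    proof (rule integral_norm_bound_integral)
      show "(\<lambda>\<tau>. H (xk + \<tau> *\<^sub>R sk) - H xk) integrable_on {0..1}"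
        using ip ic by (rule integrable_diff)
      show "(\<lambda>\<tau>. (K * norm sk) * \<tau>) integrable_on {0..1::real}"
        using int_lin1 by blast
      fix \<tau> :: real assume "\<tau> \<in> {0..1}"
      then have nd: "norm ((xk + \<tau> *\<^sub>R sk) - xk) = \<tau> * norm sk"
        by simp
      have "norm (H (xk + \<tau> *\<^sub>R sk) - H xk) \<le> K * norm ((xk + \<tau> *\<^sub>R sk) - xk)" by (rule Hl)
      also have "\<dots> = K * (\<tau> * norm sk)" by (simp only: nd)
      finally show "norm (H (xk + \<tau> *\<^sub>R sk) - H xk) \<le> (K * norm sk) * \<tau>"
        by (simp only: mult_ac)
    qed
    also have "\<dots> = K * norm sk / 2" using int_lin1 by (rule integral_unique)
    finally show ?thesis using eq by simp
  qed
qed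


lemma aux: "(p::real) \<noteq> 0 \<Longrightarrow> (1 - t / p - 2 * t / p\<^sup>2) * p\<^sup>2 = p\<^sup>2 - t * p - 2 * t"
  by (simp add: left_diff_distrib power2_eq_square)
lemma coefC3: "0 < (\<theta>::real) \<Longrightarrow> \<theta> < 1 \<Longrightarrow> 1 / (1 - \<theta>) * ((1 - \<theta>) / (1 + \<theta>))\<^sup>2 = 1 - \<theta> / (1 + \<theta>) - 2 * \<theta> / (1 + \<theta>)\<^sup>2"
proof -
  assume t: "0 < \<theta>" "\<theta> < 1"
  have n: "1 + \<theta> \<noteq> 0" "1 - \<theta> \<noteq> 0" using t by auto
  have "1 / (1 - \<theta>) * ((1 - \<theta>) / (1 + \<theta>))\<^sup>2 = (1 - \<theta>) / (1 + \<theta>)\<^sup>2"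
    using n by (simp add: power_divide power2_eq_square)
  also have "\<dots> = 1 - \<theta> / (1 + \<theta>) - 2 * \<theta> / (1 + \<theta>)\<^sup>2"
  proof -
    have "(1 - \<theta> / (1 + \<theta>) - 2 * \<theta> / (1 + \<theta>)\<^sup>2) * (1 + \<theta>)\<^sup>2 = (1 + \<theta>)\<^sup>2 - \<theta> * (1 + \<theta>) - 2 * \<theta>"
      by (rule aux[OF n(1)])
    also have "\<dots> = 1 - \<theta>" by (simp add: algebra_simps power2_eq_square)
    finally have "(1 - \<theta> / (1 + \<theta>) - 2 * \<theta> / (1 + \<theta>)\<^sup>2) * (1 + \<theta>)\<^sup>2 = 1 - \<theta>" .
    moreover have "(1 + \<theta>)\<^sup>2 \<noteq> 0" using n by simp
    ultimately show ?thesis by (metis nonzero_mult_div_cancel_right)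
  qed
  finally show ?thesis .
qed

lemma gamma_eq:
  assumes "\<theta> < 1"
  shows "gamma \<theta> B A = (1 / (1 - \<theta>)) * (norm B)\<^sup>2 - 2 * (B \<bullet> A)"
proof -
  have "(norm (B - A))\<^sup>2 = (norm B)\<^sup>2 - 2 * (B \<bullet> A) + (norm A)\<^sup>2"
    by (simp add: power2_norm_eq_inner inner_diff_left inner_diff_right inner_commute)
  then have "gamma \<theta> B A = (1 + \<theta> / (1 - \<theta>)) * (norm B)\<^sup>2 - 2 * (B \<bullet> A)"
    by (simp add: gamma_def frob_norm_eq algebra_simps)
  also have "1 + \<theta> / (1 - \<theta>) = 1 / (1 - \<theta>)" using assms by (simp add: field_simps)
  finally show ?thesis .
qed

lemma young:
  fixes Y U :: "'a::real_inner"
  assumes a: "a > 0"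
  shows "2 * (Y \<bullet> U) \<le> a * (norm Y)\<^sup>2 + (norm U)\<^sup>2 / a"
proof -
  have "0 \<le> (norm (a *\<^sub>R Y - U))\<^sup>2" by simp
  also have "\<dots> = (a *\<^sub>R Y - U) \<bullet> (a *\<^sub>R Y - U)" by (simp only: power2_norm_eq_inner)
  also have "\<dots> = a\<^sup>2 * (Y \<bullet> Y) - 2 * a * (Y \<bullet> U) + (U \<bullet> U)"
    by (simp add: inner_diff_left inner_diff_right inner_commute power2_eq_square algebra_simps)
  also have "\<dots> = a\<^sup>2 * (norm Y)\<^sup>2 - 2 * a * (Y \<bullet> U) + (norm U)\<^sup>2"
    by (simp only: power2_norm_eq_inner)
  finally have fin: "0 \<le> a\<^sup>2 * (norm Y)\<^sup>2 - 2 * a * (Y \<bullet> U) + (norm U)\<^sup>2" .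
  have eq: "a * (a * (norm Y)\<^sup>2 + (norm U)\<^sup>2 / a) = a\<^sup>2 * (norm Y)\<^sup>2 + (norm U)\<^sup>2"
    using a by (simp add: field_simps power2_eq_square)
  have "a * (2 * (Y \<bullet> U)) \<le> a * (a * (norm Y)\<^sup>2 + (norm U)\<^sup>2 / a)"
    unfolding eq using fin by linarith
  then show ?thesis using a by simp
qed

theorem lemma3p2:
  fixes f :: "real^'n \<Rightarrow> real"
    and g :: "real^'n \<Rightarrow> real^'n"
    and H :: "real^'n \<Rightarrow> real^'n^'n"
    and L M \<theta> :: real
    and xk sk :: "real^'n"
    and Bk X :: "real^'n^'n"
  assumes grad: "\<And>x. (f has_derivative (\<lambda>h. g x \<bullet> h)) (at x)"
    and hess: "\<And>x. (g has_derivative (\<lambda>h. H x *v h)) (at x)"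
    and bdd: "bdd_below (range f)"
    and L_pos: "L > 0" and M_pos: "M > 0"
    and L_lip: "\<And>x y. norm (g x - g y) \<le> L * norm (x - y)"
    and M_lip: "\<And>x y. op_norm (H x - H y) \<le> M * norm (x - y)"
    and theta: "0 < \<theta>" "\<theta> < 1"
    and Bk_sym: "sym_mat Bk" and X_sym: "sym_mat X"
  shows "gamma \<theta> (((1 - \<theta>) / (1 + \<theta>)) *\<^sub>R (Bk + X)) (H (xk + sk)) - gamma \<theta> Bk (H xk)
         \<le> 2 * real CARD('n) * L\<^sup>2 * \<theta> + real CARD('n) * M\<^sup>2 / (2 * \<theta>) * (norm sk)\<^sup>2
           + (frob_norm X)\<^sup>2
           - 2 * frob_inner X (integral {0..1} (\<lambda>\<tau>. H (xk + \<tau> *\<^sub>R sk)) - Bk)"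
proof -
  define d where "d = real CARD('n)"
  define G where "G = integral {0..1} (\<lambda>\<tau>. H (xk + \<tau> *\<^sub>R sk))"
  define H0 where "H0 = H xk"
  define H1 where "H1 = H (xk + sk)"
  define c where "c = (1 - \<theta>) / (1 + \<theta>)"
  define Y where "Y = Bk + X"
  define E where "E = d * M\<^sup>2 * (norm sk)\<^sup>2 / 4"
  have sd: "sqrt d \<ge> 0" "(sqrt d)\<^sup>2 = d" by (auto simp: d_def)
  have HM: "norm (H x - H y) \<le> (sqrt d * M) * norm (x - y)" for x y
  proof -
    have "norm (H x - H y) \<le> sqrt d * op_norm (H x - H y)" unfolding d_def by (rule norm_le_op)
    also have "\<dots> \<le> sqrt d * (M * norm (x - y))" using M_lip sd by (simp add: mult_left_mono)
    finally show ?thesis by (simp add: mult.assoc)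
  qed
  have KM: "sqrt d * M \<ge> 0" using sd M_pos by simp
  have pb: "(norm A)\<^sup>2 \<le> E" if "norm A \<le> sqrt d * M * norm sk / 2" for A :: "real^'n^'n"
  proof -
    have "(norm A)\<^sup>2 \<le> (sqrt d * M * norm sk / 2)\<^sup>2" using that by (simp add: power_mono)
    also have "\<dots> = E" using sd by (simp add: E_def power_mult_distrib power_divide)
    finally show ?thesis .
  qed
  have e1: "(norm (G - H1))\<^sup>2 \<le> E"
    using pb int_bounds(1)[OF HM KM, of xk sk] by (simp add: G_def H1_def)
  have e0: "(norm (G - H0))\<^sup>2 \<le> E"
    using pb int_bounds(2)[OF HM KM, of xk sk] by (simp add: G_def H0_def)
  have opL: "op_norm H1 \<le> L"
    unfolding op_norm_def H1_def
    by (rule onorm_le) (rule deriv_bound[OF hess L_lip], use L_pos in simp)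
  have op0: "0 \<le> op_norm H1" unfolding op_norm_def by (rule onorm_pos_le) simp
  have hh: "(norm H1)\<^sup>2 \<le> d * L\<^sup>2"
  proof -
    have "(norm H1)\<^sup>2 \<le> d * (op_norm H1)\<^sup>2" unfolding d_def by (rule norm_sq_le_op)
    also have "\<dots> \<le> d * L\<^sup>2" using opL op0 by (simp add: d_def power_mono mult_left_mono)
    finally show ?thesis .
  qed
  define a1 where "a1 = \<theta> / (1 + \<theta>)"
  define a2 where "a2 = 2 * \<theta> / (1 + \<theta>)\<^sup>2"
  define b where "b = \<theta> / (1 - \<theta>)"
  have pos: "a1 > 0" "a2 > 0" "b > 0" using theta by (auto simp: a1_def a2_def b_def)
  define yy where "yy = (norm Y)\<^sup>2"
  define bb where "bb = (norm Bk)\<^sup>2"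
  define xx where "xx = (norm X)\<^sup>2"
  define hq where "hq = (norm H1)\<^sup>2"
  define q1 where "q1 = (norm (G - H1))\<^sup>2"
  define q0 where "q0 = (norm (G - H0))\<^sup>2"
  have yyexp: "yy = bb + 2 * (Bk \<bullet> X) + xx"
  proof -
    have "yy = Y \<bullet> Y" by (simp only: yy_def power2_norm_eq_inner)
    also have "\<dots> = Bk \<bullet> Bk + 2 * (Bk \<bullet> X) + X \<bullet> X"
      by (simp add: Y_def inner_add_left inner_add_right inner_commute)
    also have "\<dots> = bb + 2 * (Bk \<bullet> X) + xx" by (simp only: bb_def xx_def power2_norm_eq_inner)
    finally show ?thesis .
  qed
  have Y1: "2 * (Y \<bullet> G - Y \<bullet> H1) \<le> a1 * yy + q1 / a1"
    using young[OF pos(1), of Y "G - H1"] by (simp add: yy_def q1_def inner_diff_right)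
  have Y2: "2 * ((1 - c) * (Y \<bullet> H1)) \<le> a2 * yy + (1 - c)\<^sup>2 * hq / a2"
    using young[OF pos(2), of Y "(1 - c) *\<^sub>R H1"]
    by (simp add: yy_def hq_def power_mult_distrib)
  have Y3: "- 2 * (Bk \<bullet> G - Bk \<bullet> H0) \<le> b * bb + q0 / b"
    using young[OF pos(3), of "- Bk" "G - H0"] by (simp add: bb_def q0_def inner_diff_right)
  have B1: "q1 / a1 \<le> E / a1" using e1 pos by (simp add: q1_def divide_right_mono)
  have B0: "q0 / b \<le> E / b" using e0 pos by (simp add: q0_def divide_right_mono)
  have B2: "(1 - c)\<^sup>2 * hq / a2 \<le> (1 - c)\<^sup>2 * (d * L\<^sup>2) / a2"
    using hh pos by (simp add: hq_def divide_right_mono mult_left_mono)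
  have C1: "E / a1 + E / b = d * M\<^sup>2 / (2 * \<theta>) * (norm sk)\<^sup>2"
    using theta by (simp add: E_def a1_def b_def field_simps)
  have C2: "(1 - c)\<^sup>2 * (d * L\<^sup>2) / a2 = 2 * d * L\<^sup>2 * \<theta>"
  proof -
    have "1 - c = 2 * \<theta> / (1 + \<theta>)" using theta by (simp add: c_def field_simps)
    then have "(1 - c)\<^sup>2 = (2 * \<theta>) * a2" by (simp add: a2_def power_divide power2_eq_square)
    then show ?thesis using theta pos by simp
  qed
  have C3: "1 / (1 - \<theta>) * c\<^sup>2 = 1 - a1 - a2"
    using coefC3[OF theta] by (simp add: c_def a1_def a2_def)
  have C4: "1 / (1 - \<theta>) = 1 + b"
    using theta by (simp add: b_def field_simps)
  have LHS: "gamma \<theta> (c *\<^sub>R Y) H1 - gamma \<theta> Bk H0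
      = (1 - a1 - a2) * yy - 2 * c * (Y \<bullet> H1) - (1 + b) * bb + 2 * (Bk \<bullet> H0)"
  proof -
    have "gamma \<theta> (c *\<^sub>R Y) H1 - gamma \<theta> Bk H0
      = (1 / (1 - \<theta>) * c\<^sup>2) * yy - 2 * c * (Y \<bullet> H1) - 1 / (1 - \<theta>) * bb + 2 * (Bk \<bullet> H0)"
      using theta by (simp add: gamma_eq yy_def bb_def power_mult_distrib)
    then show ?thesis unfolding C3 by (simp only: C4)
  qed
  have RHS: "(frob_norm X)\<^sup>2 - 2 * frob_inner X (G - Bk) = xx - 2 * (X \<bullet> G) + 2 * (Bk \<bullet> X)"
    by (simp add: frob_norm_eq frob_inner_eq xx_def inner_diff_right inner_commute)
  have YG: "Y \<bullet> G = Bk \<bullet> G + X \<bullet> G" by (simp add: Y_def inner_add_left)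
  have main: "(1 - a1 - a2) * yy - 2 * c * (Y \<bullet> H1) - (1 + b) * bb + 2 * (Bk \<bullet> H0)
      \<le> 2 * d * L\<^sup>2 * \<theta> + d * M\<^sup>2 / (2 * \<theta>) * (norm sk)\<^sup>2 + (xx - 2 * (X \<bullet> G) + 2 * (Bk \<bullet> X))"
  proof -
    have e: "(1 - a1 - a2) * yy = yy - a1 * yy - a2 * yy" "(1 + b) * bb = bb + b * bb"
      "2 * c * (Y \<bullet> H1) = 2 * (Y \<bullet> H1) - 2 * ((1 - c) * (Y \<bullet> H1))"
      by (simp_all add: algebra_simps)
    show ?thesis using Y1 Y2 Y3 B1 B0 B2 C1 C2 yyexp YG unfolding e by (smt (verit))
  qed
  show ?thesis
    using LHS RHS main by (simp add: c_def Y_def H1_def H0_def G_def d_def)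
qed

end
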